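(* Let $k\ge2$, $d=2^k+1$, and let $f(x)=x^d+g(x)$ with $g(x)=\sum_{j=0}^{2^{k-1}+1}a_jx^j\in\mathbb{F}_q[x]$ (so $\deg g\le 2^{k-1}+1$). Suppose there is an index $j$ with $a_j\neq0$ such that $\phi_j(x,y,z)$ is absolutely irreducible. Then $\phi(x,y,z)$ is absolutely irreducible.
   Context: Let $q=2^m$. For an integer $j\ge0$ let $\phi_j(x,y,z)=\dfrac{x^j+y^j+z^j+(x+y+z)^j}{(x+y)(x+z)(y+z)}$, a homogeneous polynomial of degree $j-3$ over $\mathbb{F}_2$. For $f\in\mathbb{F}_q[x]$ let $\phi(x,y,z)=\dfrac{f(x)+f(y)+f(z)+f(x+y+z)}{(x+y)(x+z)(y+z)}\in\mathbb{F}_q[x,y,z]$. Absolutely irreducible means irreducible (and nonconstant) over $\overline{\mathbb{F}_q}$. *)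

theory Defs
  imports "HOL-Algebra.Algebraic_Closure_Type"
begin

text \<open>Trivariate polynomials K[x,y,z] are represented as nested univariate polynomials
  ((K[z])[y])[x]: the outermost variable is x, the middle one y, the innermost z.\<close>

type_synonym 'a tpoly = "'a poly poly poly"

definition tconst :: "'a::zero \<Rightarrow> 'a tpoly" where
  "tconst c = [:[:[:c:]:]:]"

definition varX :: "'a::comm_semiring_1 tpoly" where "varX = [:0, 1:]"
definition varY :: "'a::comm_semiring_1 tpoly" where "varY = [:[:0, 1:]:]"
definition varZ :: "'a::comm_semiring_1 tpoly" where "varZ = [:[:[:0, 1:]:]:]"

definition subst3 :: "'a::comm_ring_1 poly \<Rightarrow> 'a tpoly \<Rightarrow> 'a tpoly" where
  "subst3 f t = poly (map_poly tconst f) t"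

text \<open>phi for f: (f(x)+f(y)+f(z)+f(x+y+z)) / ((x+y)(x+z)(y+z)) (exact division).\<close>
definition phi_of :: "'a::field poly \<Rightarrow> 'a tpoly" where
  "phi_of f = (subst3 f varX + subst3 f varY + subst3 f varZ + subst3 f (varX + varY + varZ))
      div ((varX + varY) * (varX + varZ) * (varY + varZ))"

text \<open>phi_j: the polynomial phi for f = x^j (its coefficients lie in the prime field F_2).\<close>
definition phi_j :: "nat \<Rightarrow> 'a::field tpoly" where
  "phi_j j = phi_of (monom 1 j)"

definition abs_irreducible :: "'a::field tpoly \<Rightarrow> bool" where
  "abs_irreducible P \<longleftrightarrow> irreducible (map_poly (map_poly (map_poly to_ac)) P)"

end

theory Submission
  imports Defs
begin


definition rhom :: "('a::comm_ring_1 \<Rightarrow> 'b::comm_ring_1) \<Rightarrow> bool" where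
 "rhom f \<longleftrightarrow> f 0 = 0 \<and> f 1 = 1 \<and> (\<forall>a b. f (a+b) = f a + f b) \<and> (\<forall>a b. f (a*b) = f a * f b)"

lemma rhomD: assumes "rhom f"
  shows "f 0 = 0" "f 1 = 1" "f (a+b) = f a + f b" "f (a*b) = f a * f b"
  using assms unfolding rhom_def by auto

lemma rhom_minus: assumes "rhom f" shows "f (-a) = - f a"
proof -
  have "f (-a) + f a = 0" using rhomD(3)[OF assms, of "-a" a] rhomD(1)[OF assms] by simp
  thus ?thesis by (simp add: eq_neg_iff_add_eq_0)
qed

lemma rhom_diff: assumes "rhom f" shows "f (a - b) = f a - f b"
  using rhomD(3)[OF assms, of a "-b"] rhom_minus[OF assms, of b] by simp

lemma rhom_power: assumes "rhom f" shows "f (a ^ n) = f a ^ n"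
  by (induction n) (simp_all add: rhomD[OF assms])

lemma rhom_sum: assumes "rhom f" shows "f (sum g A) = (\<Sum>x\<in>A. f (g x))"
  by (induction A rule: infinite_finite_induct) (simp_all add: rhomD[OF assms])

lemma rhom_prod: assumes "rhom f" shows "f (prod g A) = (\<Prod>x\<in>A. f (g x))"
  by (induction A rule: infinite_finite_induct) (simp_all add: rhomD[OF assms])

lemma rhom_comp: "rhom f \<Longrightarrow> rhom g \<Longrightarrow> rhom (\<lambda>x. g (f x))"
  unfolding rhom_def by auto

lemma rhom_id: "rhom (\<lambda>x. x)" unfolding rhom_def by auto

lemma rhom_const: "rhom (\<lambda>a. [:a:])"
  unfolding rhom_def by (auto simp: one_pCons)

lemma map_poly_add_hom:
  assumes "rhom f" shows "map_poly f (p + q) = map_poly f p + map_poly f q"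
  by (rule poly_eqI) (simp add: coeff_map_poly rhomD[OF assms])

lemma map_poly_mult_hom:
  assumes "rhom f" shows "map_poly f (p * q) = map_poly f p * map_poly f q"
proof (induction p)
  case 0 then show ?case by (simp add: rhomD[OF assms])
next
  case (pCons a p)
  have "map_poly f (pCons a p * q) = map_poly f (smult a q + pCons 0 (p * q))" by simp
  also have "\<dots> = smult (f a) (map_poly f q) + pCons 0 (map_poly f p * map_poly f q)"
    using pCons by (simp add: map_poly_add_hom[OF assms] map_poly_smult map_poly_pCons rhomD[OF assms])
  also have "\<dots> = map_poly f (pCons a p) * map_poly f q"
    by (simp add: map_poly_pCons rhomD[OF assms])
  finally show ?case .
qed

lemma rhom_map_poly: assumes "rhom f" shows "rhom (map_poly f)"
  unfolding rhom_def
  by (auto simp: rhomD[OF assms] map_poly_mult_hom[OF assms] map_poly_add_hom[OF assms])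

lemma rhom_poly: "rhom (\<lambda>p. poly p v)"
  unfolding rhom_def by auto

lemma rhom_poly_map: "rhom f \<Longrightarrow> rhom (\<lambda>p. poly (map_poly f p) v)"
  using rhom_comp[OF rhom_map_poly rhom_poly] by blast

lemma rhom_poly_commute: assumes "rhom g" shows "g (poly p v) = poly (map_poly g p) (g v)"
  by (induction p) (simp_all add: map_poly_pCons rhomD[OF assms])

lemma char2_neg: assumes "(2::'b::comm_ring_1) = 0" shows "- (a::'b) = a"
proof -
  have "a + a = 2 * a" by simp
  hence "a + a = 0" using assms by simp
  thus ?thesis by (simp add: add_eq_0_iff2 eq_neg_iff_add_eq_0)
qed

lemma frob: assumes "(2::'b::comm_ring_1) = 0"
  shows "((a::'b) + b) ^ (2 ^ n) = a ^ (2 ^ n) + b ^ (2 ^ n)"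
proof (induction n arbitrary: a b)
  case 0 then show ?case by simp
next
  case (Suc n)
  have sq: "(x + y)^2 = x^2 + y^2" for x y :: 'b
  proof -
    have "(x+y)^2 = x^2 + y^2 + 2 * (x*y)" by (simp add: power2_eq_square algebra_simps)
    thus ?thesis using assms by simp
  qed
  have "(a+b)^(2^Suc n) = ((a+b)^(2^n))^2" by (simp add: power_mult[symmetric] mult.commute)
  also have "\<dots> = (a^(2^n))^2 + (b^(2^n))^2" using Suc sq by simp
  also have "\<dots> = a^(2^Suc n) + b^(2^Suc n)" by (simp add: power_mult[symmetric] mult.commute)
  finally show ?case .
qed

lemma char2_poly: assumes "(2::'b::comm_ring_1) = 0" shows "(2::'b poly) = 0"
proof -
  have "(2::'b poly) = 1 + 1" by simp
  also have "\<dots> = [:1 + 1:]" by (simp add: one_pCons)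
  finally have "(2::'b poly) = [:2:]" by simp
  with assms show ?thesis by simp
qed

lemma roots_prod_dvd:
  fixes p :: "'r::idom poly"
  assumes "finite B" "\<forall>b\<in>B. poly p b = 0"
  shows "(\<Prod>b\<in>B. [:-b,1:]) dvd p"
  using assms
proof (induction B arbitrary: p rule: finite_induct)
  case empty then show ?case by simp
next
  case (insert b B)
  from insert.prems have "poly p b = 0" by simp
  then obtain p' where p': "p = [:-b,1:] * p'" by (auto simp: poly_eq_0_iff_dvd elim: dvdE)
  have "\<forall>c\<in>B. poly p' c = 0"
  proof
    fix c assume c: "c \<in> B"
    hence "c \<noteq> b" using insert.hyps by auto
    moreover have "poly p c = 0" using insert.prems c by simp
    ultimately show "poly p' c = 0" using p' by simp
  qed
  from insert.IH[OF this] have "(\<Prod>b\<in>B. [:-b,1:]) dvd p'" .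
  moreover have "(\<Prod>b\<in>insert b B. [:-b,1:]) = [:-b,1:] * (\<Prod>b\<in>B. [:-b,1:])"
    using insert.hyps by simp
  ultimately show ?case using p' by (metis mult_dvd_mono dvd_refl)
qed

lemma degree_linprod: "finite B \<Longrightarrow> degree (\<Prod>b\<in>B. [:-b,1::'r::idom:]) = card B"
  by (subst degree_prod_eq_sum_degree) auto

lemma monic_linprod: "lead_coeff (\<Prod>b\<in>B. [:-b,1::'r::idom:]) = 1"
  by (simp add: lead_coeff_prod)

lemma linprod_nz: "(\<Prod>b\<in>B. [:-b,1::'r::idom:]) \<noteq> 0"
  using monic_linprod[of B] by (metis leading_coeff_0_iff zero_neq_one)

lemma split_linprod:
  fixes p q :: "'r::idom poly"
  assumes "finite A" "p * q = (\<Prod>a\<in>A. [:-a,1:])"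
  shows "\<exists>A1 A2 c1 c2. A1 \<union> A2 = A \<and> A1 \<inter> A2 = {} \<and> p = smult c1 (\<Prod>a\<in>A1. [:-a,1:])
          \<and> q = smult c2 (\<Prod>a\<in>A2. [:-a,1:]) \<and> c1 * c2 = 1"
  using assms
proof (induction A arbitrary: p q rule: finite_induct)
  case empty
  hence "p dvd 1" "q dvd 1" by (metis dvd_triv_left prod.empty, metis dvd_triv_right prod.empty)
  then obtain c1 c2 where "p = [:c1:]" "q = [:c2:]" by (auto elim!: is_unit_polyE)
  moreover from this empty have "[:c1 * c2:] = [:1:]" by (simp add: one_pCons mult.commute)
  ultimately show ?case by (intro exI[of _ "{}"] exI[of _ "{}"] exI[of _ c1] exI[of _ c2]) (auto simp: mult.commute)
next
  case (insert a A)
  have eq: "p * q = [:-a,1:] * (\<Prod>a\<in>A. [:-a,1:])" using insert by simp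
  hence "poly (p*q) a = 0" by simp
  hence "poly p a = 0 \<or> poly q a = 0" by simp
  thus ?case
  proof
    assume "poly p a = 0"
    then obtain p' where p': "p = [:-a,1:] * p'" by (auto simp: poly_eq_0_iff_dvd elim: dvdE)
    with eq have "[:-a,1:] * (p' * q) = [:-a,1:] * (\<Prod>a\<in>A. [:-a,1:])" by (metis mult.assoc)
    hence "p' * q = (\<Prod>a\<in>A. [:-a,1:])" by (subst (asm) mult_left_cancel) auto
    from insert.IH[OF this] obtain A1 A2 c1 c2 where h: "A1 \<union> A2 = A" "A1 \<inter> A2 = {}"
      "p' = smult c1 (\<Prod>a\<in>A1. [:-a,1:])" "q = smult c2 (\<Prod>a\<in>A2. [:-a,1:])" "c1 * c2 = 1" by blast
    have "a \<notin> A1" "finite A1" using h(1) insert.hyps by auto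
    hence "p = smult c1 (\<Prod>a\<in>insert a A1. [:-a,1:])" using p' h(3) by (simp add: mult_smult_right)
    thus ?thesis using h insert.hyps by (intro exI[of _ "insert a A1"] exI[of _ A2] exI[of _ c1] exI[of _ c2]) auto
  next
    assume "poly q a = 0"
    then obtain q' where q': "q = [:-a,1:] * q'" by (auto simp: poly_eq_0_iff_dvd elim: dvdE)
    with eq have "[:-a,1:] * (p * q') = [:-a,1:] * (\<Prod>a\<in>A. [:-a,1:])" by (metis mult.left_commute)
    hence "p * q' = (\<Prod>a\<in>A. [:-a,1:])" by (subst (asm) mult_left_cancel) auto
    from insert.IH[OF this] obtain A1 A2 c1 c2 where h: "A1 \<union> A2 = A" "A1 \<inter> A2 = {}"
      "p = smult c1 (\<Prod>a\<in>A1. [:-a,1:])" "q' = smult c2 (\<Prod>a\<in>A2. [:-a,1:])" "c1 * c2 = 1" by blast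
    have "a \<notin> A2" "finite A2" using h(1) insert.hyps by auto
    hence "q = smult c2 (\<Prod>a\<in>insert a A2. [:-a,1:])" using q' h(4) by (simp add: mult_smult_right)
    thus ?thesis using h insert.hyps by (intro exI[of _ A1] exI[of _ "insert a A2"] exI[of _ c1] exI[of _ c2]) auto
  qed
qed



lemma poly_linprod_nz:
  fixes a :: "'r::idom"
  assumes "finite B" "a \<notin> B" "c \<noteq> 0"
  shows "poly (smult c (\<Prod>b\<in>B. [:-b,1:])) a \<noteq> 0"
  using assms by (auto simp: poly_prod)

lemma core:
  fixes Sp Sq :: "'r::idom poly poly"
  assumes ds: "degree Sp = s" and dt: "degree Sq = t" and ts: "t \<le> s"
   and z: "\<And>n. 1 \<le> n \<Longrightarrow> n \<le> t \<Longrightarrow> coeff (Sp*Sq) (s+t-n) = 0"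
   and fac: "lead_coeff Sp * lead_coeff Sq = (\<Prod>a\<in>A. [:-a,1:])" and fin: "finite A"
   and cA: "card A = s + t"
   and xp: "\<And>i. degree (coeff Sp i) \<le> i" and xq: "\<And>i. degree (coeff Sq i) \<le> i"
  shows "Sq = monom (lead_coeff Sq) t \<and> (\<exists>c A2. c dvd 1 \<and> A2 \<subseteq> A \<and> card A2 = t \<and>
          lead_coeff Sq = smult c (\<Prod>a\<in>A2. [:-a,1:]))"
proof -
  define p0 where "p0 = lead_coeff Sp"
  define q0 where "q0 = lead_coeff Sq"
  obtain A1 A2 c1 c2 where sp: "A1 \<union> A2 = A" "A1 \<inter> A2 = {}"
    "p0 = smult c1 (\<Prod>a\<in>A1. [:-a,1:])" "q0 = smult c2 (\<Prod>a\<in>A2. [:-a,1:])" "c1 * c2 = 1"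
    using split_linprod[OF fin fac] unfolding p0_def q0_def by blast
  have c1: "c1 \<noteq> 0" and c2: "c2 \<noteq> 0" using sp(5) by auto
  have f1: "finite A1" and f2: "finite A2" using sp(1) fin by auto
  have dp0: "degree p0 = card A1" using sp(3) c1 f1 by (simp add: degree_linprod)
  have dq0: "degree q0 = card A2" using sp(4) c2 f2 by (simp add: degree_linprod)
  have "degree p0 \<le> s" using xp[of s] ds unfolding p0_def by simp
  moreover have "degree q0 \<le> t" using xq[of t] dt unfolding q0_def by simp
  moreover have "card A1 + card A2 = s + t" using cA sp(1,2) f1 f2 by (metis card_Un_disjoint)
  ultimately have cA1: "card A1 = s" and cA2: "card A2 = t" using dp0 dq0 by auto
  have vanish1: "x = 0" if "x * q0 + p0 * y = 0" "degree x < s" for x y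
  proof (rule ccontr)
    assume xnz: "x \<noteq> 0"
    have "\<forall>a\<in>A1. poly x a = 0"
    proof
      fix a assume a: "a \<in> A1"
      have "poly p0 a = c1 * (\<Prod>b\<in>A1. poly [:-b,1:] a)" using sp by (simp add: poly_prod)
      also have "(\<Prod>b\<in>A1. poly [:-b,1:] a) = 0" using a f1 by (simp add: prod_zero_iff)
      finally have "poly p0 a = 0" by simp
      moreover have "poly (x * q0 + p0 * y) a = 0" using that(1) by simp
      ultimately have "poly x a * poly q0 a = 0" by simp
      moreover have "poly q0 a \<noteq> 0" using sp(2,4) a f2 c2 poly_linprod_nz by blast
      ultimately show "poly x a = 0" by simp
    qed
    from roots_prod_dvd[OF f1 this] have "(\<Prod>a\<in>A1. [:-a,1:]) dvd x" .
    from dvd_imp_degree_le[OF this xnz] have "card A1 \<le> degree x" using f1 by (simp add: degree_linprod)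
    thus False using that(2) cA1 by simp
  qed
  have vanish2: "y = 0" if "x * q0 + p0 * y = 0" "degree y < t" for x y
  proof (rule ccontr)
    assume ynz: "y \<noteq> 0"
    have "\<forall>a\<in>A2. poly y a = 0"
    proof
      fix a assume a: "a \<in> A2"
      have "poly q0 a = c2 * (\<Prod>b\<in>A2. poly [:-b,1:] a)" using sp by (simp add: poly_prod)
      also have "(\<Prod>b\<in>A2. poly [:-b,1:] a) = 0" using a f2 by (simp add: prod_zero_iff)
      finally have "poly q0 a = 0" by simp
      moreover have "poly (x * q0 + p0 * y) a = 0" using that(1) by simp
      ultimately have "poly p0 a * poly y a = 0" by simp
      moreover have "poly p0 a \<noteq> 0" using sp(2,3) a f1 c1 poly_linprod_nz by blast
      ultimately show "poly y a = 0" by simp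
    qed
    from roots_prod_dvd[OF f2 this] have "(\<Prod>a\<in>A2. [:-a,1:]) dvd y" .
    from dvd_imp_degree_le[OF this ynz] have "card A2 \<le> degree y" using f2 by (simp add: degree_linprod)
    thus False using that(2) cA2 by simp
  qed
  have key: "\<forall>m. 1 \<le> m \<and> m \<le> n \<longrightarrow> coeff Sp (s-m) = 0 \<and> coeff Sq (t-m) = 0" if "n \<le> t" for n
    using that
  proof (induction n)
    case 0 then show ?case by simp
  next
    case (Suc n)
    define N where "N = Suc n"
    have IH: "\<And>m. 1 \<le> m \<Longrightarrow> m \<le> n \<Longrightarrow> coeff Sp (s-m) = 0 \<and> coeff Sq (t-m) = 0"
      using Suc by auto
    have Nt: "N \<le> t" "1 \<le> N" using Suc.prems N_def by auto
    define nn where "nn = s + t - N"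
    define f where "f i = coeff Sp i * coeff Sq (nn - i)" for i
    have "coeff (Sp*Sq) nn = (\<Sum>i\<le>nn. f i)" unfolding f_def by (simp add: coeff_mult)
    also have "\<dots> = (\<Sum>i\<in>{s-N, s}. f i)"
    proof (rule sum.mono_neutral_right)
      show "finite {..nn}" by simp
      show "{s - N, s} \<subseteq> {..nn}" using Nt ts unfolding nn_def by auto
      show "\<forall>i\<in>{..nn} - {s - N, s}. f i = 0"
      proof
        fix i assume i: "i \<in> {..nn} - {s - N, s}"
        show "f i = 0"
        proof (cases "s < i")
          case True then show ?thesis unfolding f_def using ds by (simp add: coeff_eq_0)
        next
          case False
          show ?thesis
          proof (cases "i < s - N")
            case True
            hence "nn - i > t" unfolding nn_def using Nt ts by auto
            then show ?thesis unfolding f_def using dt by (simp add: coeff_eq_0)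
          next
            case False2: False
            with False i have "1 \<le> s - i" "s - i \<le> n" using Nt ts unfolding N_def by auto
            from IH[OF this] have "coeff Sp (s - (s - i)) = 0" by simp
            moreover have "s - (s - i) = i" using \<open>\<not> s < i\<close> by simp
            ultimately show ?thesis unfolding f_def by simp
          qed
        qed
      qed
    qed
    also have "\<dots> = f (s - N) + f s" using Nt ts by (subst sum.insert) auto
    also have "\<dots> = coeff Sp (s-N) * q0 + p0 * coeff Sq (t-N)"
    proof -
      have "nn - (s - N) = t" "nn - s = t - N" unfolding nn_def using Nt ts by auto
      thus ?thesis unfolding f_def p0_def q0_def using ds dt by simp
    qed
    finally have eq: "coeff Sp (s-N) * q0 + p0 * coeff Sq (t-N) = 0"
      using z[OF Nt(2) Nt(1)] unfolding nn_def by simp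
    have "degree (coeff Sp (s-N)) < s" using xp[of "s-N"] Nt ts by linarith
    from vanish1[OF eq this] have "coeff Sp (s-N) = 0" .
    moreover have "degree (coeff Sq (t-N)) < t" using xq[of "t-N"] Nt by linarith
    from vanish2[OF eq this] have "coeff Sq (t-N) = 0" .
    ultimately show ?case using IH unfolding N_def by (auto simp: le_Suc_eq)
  qed
  have "Sq = monom q0 t"
  proof (rule poly_eqI)
    fix i show "coeff Sq i = coeff (monom q0 t) i"
    proof (cases "i = t")
      case True then show ?thesis using dt unfolding q0_def by simp
    next
      case False
      show ?thesis
      proof (cases "i < t")
        case True
        hence "1 \<le> t - i \<and> t - i \<le> t" by auto
        hence "coeff Sq (t - (t-i)) = 0" using key[of t] by blast
        thus ?thesis using True by simp
      next
        case False
        then show ?thesis using \<open>i \<noteq> t\<close> dt by (simp add: coeff_eq_0)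
      qed
    qed
  qed
  moreover have "c2 dvd 1" using sp(5) by (metis dvd_triv_right)
  ultimately show ?thesis using sp cA2 unfolding q0_def by blast
qed



definition ev1 :: "('k::comm_ring_1 \<Rightarrow> 'b::comm_ring_1) \<Rightarrow> 'b \<Rightarrow> 'k poly \<Rightarrow> 'b" where
  "ev1 u vz c = poly (map_poly u c) vz"
definition ev2 :: "('k::comm_ring_1 \<Rightarrow> 'b::comm_ring_1) \<Rightarrow> 'b \<Rightarrow> 'b \<Rightarrow> 'k poly poly \<Rightarrow> 'b" where
  "ev2 u vy vz b = poly (map_poly (ev1 u vz) b) vy"
definition ev3 :: "('k::comm_ring_1 \<Rightarrow> 'b::comm_ring_1) \<Rightarrow> 'b \<Rightarrow> 'b \<Rightarrow> 'b \<Rightarrow> 'k tpoly \<Rightarrow> 'b" where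
  "ev3 u vx vy vz h = poly (map_poly (ev2 u vy vz) h) vx"

lemma rhom_ev1: "rhom u \<Longrightarrow> rhom (ev1 u vz)"
  unfolding ev1_def[abs_def] by (rule rhom_poly_map)
lemma rhom_ev2: "rhom u \<Longrightarrow> rhom (ev2 u vy vz)"
  unfolding ev2_def[abs_def] by (rule rhom_poly_map[OF rhom_ev1])
lemma rhom_ev3: "rhom u \<Longrightarrow> rhom (ev3 u vx vy vz)"
  unfolding ev3_def[abs_def] by (rule rhom_poly_map[OF rhom_ev2])

lemma ev_poly_commute:
  assumes "rhom \<Psi>" "rhom g"
  shows "\<Psi> (poly (map_poly g p) v) = poly (map_poly (\<lambda>x. \<Psi> (g x)) p) (\<Psi> v)"
  using rhom_poly_commute[OF assms(1)] map_poly_map_poly[of \<Psi> g p] rhomD(1)[OF assms(1)]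
     rhomD(1)[OF assms(2)] by (simp add: o_def)

lemma ev3_commute:
  assumes "rhom \<Psi>" "rhom u"
  shows "\<Psi> (ev3 u vx vy vz h) = ev3 (\<lambda>a. \<Psi> (u a)) (\<Psi> vx) (\<Psi> vy) (\<Psi> vz) h"
proof -
  have 1: "\<Psi> (ev1 u vz c) = ev1 (\<lambda>a. \<Psi> (u a)) (\<Psi> vz) c" for c
    unfolding ev1_def by (rule ev_poly_commute[OF assms])
  have 2: "\<Psi> (ev2 u vy vz b) = ev2 (\<lambda>a. \<Psi> (u a)) (\<Psi> vy) (\<Psi> vz) b" for b
    unfolding ev2_def by (subst ev_poly_commute[OF assms(1) rhom_ev1[OF assms(2)]]) (simp add: 1)
  show ?thesis
    unfolding ev3_def by (subst ev_poly_commute[OF assms(1) rhom_ev2[OF assms(2)]]) (simp add: 2)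
qed

lemma tconst_0[simp]: "tconst 0 = 0" by (simp add: tconst_def)
lemma tconst_1[simp]: "tconst 1 = 1" by (simp add: tconst_def one_pCons)
lemma rhom_tconst: "rhom (tconst :: 'k::comm_ring_1 \<Rightarrow> 'k tpoly)"
  unfolding rhom_def tconst_def by (auto simp: one_pCons)

lemma ev1_id: "ev1 tconst varZ c = [:[:c:]:]"
  unfolding ev1_def
  by (induction c) (simp_all add: map_poly_pCons tconst_def varZ_def)

lemma ev2_id: "ev2 tconst varY varZ b = [:b:]"
  unfolding ev2_def
proof (induction b)
  case 0 then show ?case by simp
next
  case (pCons a b)
  have "ev1 tconst varZ 0 = 0" by (simp add: ev1_def)
  then show ?case using pCons by (simp add: map_poly_pCons ev1_id varY_def)
qed

lemma ev3_id: "ev3 tconst varX varY varZ h = h"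
  unfolding ev3_def
proof (induction h)
  case 0 then show ?case by simp
next
  case (pCons a h)
  have "ev2 tconst varY varZ 0 = 0" by (simp add: ev2_def)
  then show ?case using pCons by (simp add: map_poly_pCons ev2_id varX_def)
qed

definition S :: "'k::comm_ring_1 tpoly \<Rightarrow> 'k tpoly poly" where
  "S = ev3 (\<lambda>a. [:tconst a:]) (monom varX 1) (monom varY 1) (monom varZ 1)"

lemma rhom_S: "rhom S"
  unfolding S_def by (rule rhom_ev3[OF rhom_comp[OF rhom_tconst rhom_const]])

lemma S_eval1: "poly (S h) 1 = h"
proof -
  have "poly (S h) 1 = ev3 (\<lambda>a. poly [:tconst a:] 1) (poly (monom varX 1) 1) (poly (monom varY 1) 1)
           (poly (monom varZ 1) 1) h"
    unfolding S_def by (rule ev3_commute[OF rhom_poly rhom_comp[OF rhom_tconst rhom_const]])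
  also have "\<dots> = ev3 tconst varX varY varZ h" by (simp add: poly_monom)
  finally show ?thesis by (simp add: ev3_id)
qed

lemma S_tconst: "S (tconst c) = [:tconst c:]"
  unfolding S_def ev3_def ev2_def ev1_def tconst_def by (simp add: map_poly_pCons tconst_def)

lemma ev2_0: "rhom u \<Longrightarrow> ev2 u vy vz 0 = 0" using rhomD(1)[OF rhom_ev2] by blast
lemma ev2_1: "rhom u \<Longrightarrow> ev2 u vy vz 1 = 1" using rhomD(2)[OF rhom_ev2] by blast
lemma ev1_0: "rhom u \<Longrightarrow> ev1 u vz 0 = 0" using rhomD(1)[OF rhom_ev1] by blast
lemma ev1_1: "rhom u \<Longrightarrow> ev1 u vz 1 = 1" using rhomD(2)[OF rhom_ev1] by blast

lemma S_varX: "S varX = monom varX 1"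
proof -
  have r: "rhom (\<lambda>a. [:tconst a:] :: 'a tpoly poly)" by (rule rhom_comp[OF rhom_tconst rhom_const])
  show ?thesis
  unfolding S_def ev3_def varX_def[of]
  using ev2_0[OF r] ev2_1[OF r] by (simp add: map_poly_pCons one_pCons[symmetric])
qed

lemma S_varY: "S varY = monom varY 1"
proof -
  have r: "rhom (\<lambda>a. [:tconst a:] :: 'a tpoly poly)" by (rule rhom_comp[OF rhom_tconst rhom_const])
  show ?thesis
  unfolding S_def ev3_def ev2_def varY_def
  using ev1_0[OF r] ev1_1[OF r] by (simp add: map_poly_pCons one_pCons[symmetric])
qed

lemma S_varZ: "S varZ = monom varZ 1"
  unfolding S_def ev3_def ev2_def ev1_def varZ_def
  by (simp add: map_poly_pCons tconst_def one_pCons[symmetric] )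



definition xc :: "'k::comm_ring_1 tpoly poly \<Rightarrow> bool" where
  "xc P \<longleftrightarrow> (\<forall>i. degree (coeff P i) = 0)"

lemma xc_add: "xc P \<Longrightarrow> xc Q \<Longrightarrow> xc (P + Q)"
  unfolding xc_def by (metis coeff_add degree_add_le le_zero_eq)

lemma xc_mult: "xc P \<Longrightarrow> xc Q \<Longrightarrow> xc (P * Q)"
  unfolding xc_def coeff_mult
  by (metis (no_types, lifting) bot_nat_0.extremum_uniqueI degree_mult_le degree_sum_le finite_atMost
       add_0)

lemma xc_const: "degree c = 0 \<Longrightarrow> xc [:c:]"
  unfolding xc_def by (auto simp: coeff_pCons split: nat.splits)

lemma xc_monom: "degree c = 0 \<Longrightarrow> xc (monom c n)"
  unfolding xc_def by (auto simp: coeff_monom)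

lemma xc_ev2: "xc (ev2 (\<lambda>a. [:tconst a:]) (monom varY 1) (monom varZ 1) b)"
proof -
  have e1: "xc (ev1 (\<lambda>a. [:tconst a:]) (monom varZ 1) c)" for c :: "'a poly"
    unfolding ev1_def
  proof (induction c)
    case 0 then show ?case by (simp add: xc_def)
  next
    case (pCons a c)
    have "poly (map_poly (\<lambda>a. [:tconst a:]) (pCons a c)) (monom varZ 1)
       = [:tconst a:] + monom varZ 1 * poly (map_poly (\<lambda>a. [:tconst a:]) c) (monom varZ 1)"
      by (simp add: map_poly_pCons)
    moreover have "xc [:tconst a:]" by (rule xc_const) (simp add: tconst_def)
    moreover have "xc (monom varZ 1 :: 'a tpoly poly)" by (rule xc_monom) (simp add: varZ_def)
    ultimately show ?case using pCons by (simp add: xc_add xc_mult)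
  qed
  show ?thesis unfolding ev2_def
  proof (induction b)
    case 0 then show ?case by (simp add: xc_def)
  next
    case (pCons a b)
    have r: "rhom (\<lambda>a. [:tconst a:] :: 'a tpoly poly)" by (rule rhom_comp[OF rhom_tconst rhom_const])
    have "poly (map_poly (ev1 (\<lambda>a. [:tconst a:]) (monom varZ 1)) (pCons a b)) (monom varY 1)
       = ev1 (\<lambda>a. [:tconst a:]) (monom varZ 1) a + monom varY 1 * poly (map_poly (ev1 (\<lambda>a. [:tconst a:]) (monom varZ 1)) b) (monom varY 1)"
      by (simp add: map_poly_pCons ev1_0[OF r])
    moreover have "xc (monom varY 1 :: 'a tpoly poly)" by (rule xc_monom) (simp add: varY_def)
    ultimately show ?case using pCons e1 by (simp add: xc_add xc_mult)
  qed
qed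

lemma S_xdeg: "degree (coeff (S h) i) \<le> i"
proof -
  have r: "rhom (\<lambda>a. [:tconst a:] :: 'a tpoly poly)" by (rule rhom_comp[OF rhom_tconst rhom_const])
  show ?thesis
  unfolding S_def ev3_def
  proof (induction h arbitrary: i)
    case 0 then show ?case by simp
  next
    case (pCons b h)
    let ?E = "ev2 (\<lambda>a. [:tconst a:]) (monom varY 1) (monom varZ 1)"
    let ?T = "poly (map_poly ?E h) (monom varX 1)"
    have eq: "poly (map_poly ?E (pCons b h)) (monom varX 1) = ?E b + monom varX 1 * ?T"
      by (simp add: map_poly_pCons ev2_0[OF r])
    have d1: "degree (coeff (?E b) i) = 0" using xc_ev2[of b] unfolding xc_def by blast
    have d2: "degree (coeff (monom varX 1 * ?T) i) \<le> i"
    proof (cases i)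
      case 0 then show ?thesis by (simp add: coeff_monom_mult)
    next
      case (Suc i')
      have "degree (varX * coeff ?T i') \<le> degree (varX::'a tpoly) + degree (coeff ?T i')"
        by (rule degree_mult_le)
      also have "\<dots> \<le> 1 + i'" using pCons.IH[of i'] by (simp add: varX_def)
      finally show ?thesis using Suc by (simp add: coeff_monom_mult)
    qed
    show ?case unfolding eq coeff_add using d1 d2 by (metis degree_add_le le0 add_0)
  qed
qed

definition Nj :: "nat \<Rightarrow> 'k::comm_ring_1 tpoly" where
  "Nj j = varX ^ j + varY ^ j + varZ ^ j + (varX + varY + varZ) ^ j"

definition den :: "'k::comm_ring_1 tpoly" where
  "den = (varX + varY) * (varX + varZ) * (varY + varZ)"

lemma S_add: "S (a + b) = S a + S b" using rhomD(3)[OF rhom_S] .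
lemma S_mult: "S (a * b) = S a * S b" using rhomD(4)[OF rhom_S] .
lemma S_power: "S (a ^ n) = S a ^ n" using rhom_power[OF rhom_S] .

lemma S_Nj: "S (Nj j) = monom (Nj j) j"
  unfolding Nj_def by (simp add: S_add S_power S_varX S_varY S_varZ add_monom monom_power)

lemma S_den: "S den = monom den 3"
  unfolding den_def by (simp add: S_add S_mult S_varX S_varY S_varZ add_monom mult_monom numeral_3_eq_3)

lemma S_zero: "S h = 0 \<Longrightarrow> h = 0" using S_eval1[of h] by simp

lemma hom_div:
  fixes Phi :: "'k::idom tpoly"
  assumes "den * Phi = N" "(den::'k tpoly) \<noteq> 0" "S N = monom N j"
  shows "S Phi = monom Phi (j-3) \<and> (j < 3 \<longrightarrow> Phi = 0)"
proof -
  have e: "monom den 3 * S Phi = monom (den * Phi) j"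
    using assms(1,3) S_mult[of den Phi] S_den by metis
  show ?thesis
  proof (cases "j < 3")
    case True
    have "S Phi = 0"
    proof (rule ccontr)
      assume nz: "S Phi \<noteq> 0"
      have "degree (monom den 3 * S Phi) = 3 + degree (S Phi)"
        using nz assms(2) by (simp add: degree_mult_eq degree_monom_eq)
      moreover have "degree (monom (den * Phi) j) \<le> j" by (simp add: degree_monom_le)
      ultimately show False using e True by simp
    qed
    hence "Phi = 0" by (rule S_zero)
    thus ?thesis by (simp add: rhomD(1)[OF rhom_S])
  next
    case False
    hence "monom (den * Phi) j = monom den 3 * monom Phi (j - 3)" by (simp add: mult_monom)
    with e have "monom den 3 * S Phi = monom den 3 * monom Phi (j - 3)" by simp
    hence "S Phi = monom Phi (j-3)" using assms(2) by simp
    thus ?thesis using False by simp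
  qed
qed

lemma S_unit:
  fixes w :: "'k::idom tpoly"
  assumes "w dvd 1" shows "\<exists>v. v \<noteq> 0 \<and> S w = [:v:]"
proof -
  obtain w' where "1 = w * w'" using assms by (rule dvdE)
  hence "S w * S w' = 1" using S_mult[of w w'] rhomD(2)[OF rhom_S] by metis
  hence "S w dvd 1" by (metis dvd_triv_left)
  then obtain v where "S w = [:v:]" "v dvd 1" by (rule is_unit_polyE)
  thus ?thesis by auto
qed



lemma char2_add_self: "(2::'b::comm_ring_1) = 0 \<Longrightarrow> (a::'b) + a = 0"
  by (metis mult_2 mult_zero_left)

definition yy :: "'k::comm_ring_1 poly poly" where "yy = [:0,1:]"
definition zz :: "'k::comm_ring_1 poly poly" where "zz = [:[:0,1:]:]"

lemma varY_yy: "varY = [:yy:]" by (simp add: varY_def yy_def)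
lemma varZ_zz: "varZ = [:zz:]" by (simp add: varZ_def zz_def)

lemma poly_Nj: "poly (Nj j) v = v^j + yy^j + zz^j + (v + yy + zz)^j"
  by (simp add: Nj_def varX_def varY_yy varZ_zz ac_simps)

lemma yy_ne_zz: "(yy::'k::comm_ring_1 poly poly) \<noteq> zz"
proof
  assume "(yy::'k poly poly) = zz" hence "coeff (yy::'k poly poly) 1 = coeff zz 1" by simp
  thus False by (simp add: yy_def zz_def)
qed

lemma yy_zz_nz: "(yy::'k::comm_ring_1 poly poly) + zz \<noteq> 0"
proof
  assume "(yy::'k poly poly) + zz = 0" hence "coeff ((yy::'k poly poly) + zz) 1 = 0" by simp
  thus False by (simp add: yy_def zz_def)
qed

lemma den_alt: "(2::'k::idom) = 0 \<Longrightarrow> (den::'k tpoly) = [:-yy,1:] * [:-zz,1:] * [:yy + zz:]"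
proof -
  assume c: "(2::'k) = 0"
  have "(2::'k poly poly) = 0" using char2_poly[OF char2_poly[OF c]] .
  hence n: "- (x::'k poly poly) = x" for x by (rule char2_neg)
  show ?thesis unfolding den_def varX_def varY_yy varZ_zz by (simp add: n one_pCons)
qed

lemma den_nz: "(2::'k::idom) = 0 \<Longrightarrow> (den::'k tpoly) \<noteq> 0"
proof -
  assume c: "(2::'k) = 0"
  have "[:-yy,1:] \<noteq> (0::'k tpoly)" "[:-zz,1:] \<noteq> (0::'k tpoly)" "[:yy+zz:] \<noteq> (0::'k tpoly)"
    using yy_zz_nz by auto
  thus ?thesis by (simp only: den_alt[OF c] mult_eq_0_iff) simp
qed

lemma den_dvd_Nj:
  fixes j :: nat
  assumes c: "(2::'k::field) = 0"
  shows "(den::'k tpoly) dvd Nj j"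
proof -
  have c1: "(2::'k poly) = 0" using char2_poly[OF c] .
  have c2: "(2::'k poly poly) = 0" using char2_poly[OF c1] .
  have c3: "(2::'k tpoly) = 0" using char2_poly[OF c2] .
  have "\<forall>b\<in>{yy,zz}. poly (Nj j) b = (0::'k poly poly)"
    by (simp add: poly_Nj c2)
  from roots_prod_dvd[OF _ this] have "(\<Prod>b\<in>{yy,zz}. [:-b,1:]) dvd (Nj j :: 'k tpoly)" by simp
  moreover have "(\<Prod>b\<in>{yy,zz}. [:-b,1:]) = [:-yy,1:] * [:-zz,1::'k poly poly:]"
    using yy_ne_zz[where 'k='k] by (subst prod.insert) auto
  ultimately obtain M where M: "(Nj j :: 'k tpoly) = [:-yy,1:] * [:-zz,1:] * M" by (auto elim!: dvdE)
  define z' where "z' = ([:0,1:] :: 'k poly)"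
  define psi where "psi c = poly c z'" for c :: "'k poly poly"
  have rpsi: "rhom psi" unfolding psi_def[abs_def] by (rule rhom_poly)
  have rPsi: "rhom (map_poly psi)" by (rule rhom_map_poly[OF rpsi])
  have psi_yy: "psi yy = z'" and psi_zz: "psi zz = z'" by (simp_all add: psi_def yy_def zz_def z'_def)
  have psi0: "psi 0 = 0" and psi1: "psi 1 = 1" using rhomD[OF rpsi] by auto
  have PX: "map_poly psi varX = [:0,1:]" by (simp add: varX_def map_poly_pCons psi0 psi1 one_pCons[symmetric])
  have PY: "map_poly psi varY = [:z':]" by (simp add: varY_yy map_poly_pCons psi0 psi_yy)
  have PZ: "map_poly psi varZ = [:z':]" by (simp add: varZ_zz map_poly_pCons psi0 psi_zz)
  have "map_poly psi (Nj j) = 0"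
    unfolding Nj_def
    by (simp add: rhomD[OF rPsi] rhom_power[OF rPsi] PX PY PZ add.assoc
        char2_add_self[OF char2_poly[OF c1]] c2)
  moreover have "map_poly psi ([:-yy,1:] * [:-zz,1:]) = [:-z',1:] * [:-z',1:]"
  proof -
    have "map_poly psi [:-yy,1:] = [:-z',1:]" "map_poly psi [:-zz,1:] = [:-z',1:]"
      by (simp_all add: map_poly_pCons psi0 psi1 psi_yy psi_zz rhom_minus[OF rpsi])
    thus ?thesis by (simp only: rhomD(4)[OF rPsi])
  qed
  ultimately have "[:-z',1:] * [:-z',1:] * map_poly psi M = 0"
    using M rhomD(4)[OF rPsi] by metis
  moreover have "[:-z',1:] * [:-z',1:] \<noteq> (0 :: 'k poly poly)" by (simp only: mult_eq_0_iff) simp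
  ultimately have PM: "map_poly psi M = 0" by (simp only: mult_eq_0_iff) simp
  have "yy + zz dvd coeff M i" for i
  proof -
    have "psi (coeff M i) = 0" using PM psi0 by (metis coeff_0 coeff_map_poly)
    hence "[:-z',1:] dvd coeff M i" unfolding psi_def by (simp add: poly_eq_0_iff_dvd)
    moreover have "[:-z',1:] = yy + zz" using char2_neg[OF c1, of z']
      by (simp add: yy_def zz_def z'_def)
    ultimately show ?thesis by simp
  qed
  hence "[:yy + zz:] dvd M" by (simp add: const_poly_dvd_iff)
  thus ?thesis unfolding den_alt[OF c] M by (rule mult_dvd_mono[OF dvd_refl])
qed

definition Nf :: "'k::comm_ring_1 poly \<Rightarrow> 'k tpoly" where
  "Nf f = subst3 f varX + subst3 f varY + subst3 f varZ + subst3 f (varX + varY + varZ)"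

lemma subst3_sum: "subst3 (f::'k::comm_ring_1 poly) t = (\<Sum>j\<le>degree f. tconst (coeff f j) * t ^ j)"
proof -
  have inj: "tconst c = 0 \<longleftrightarrow> c = (0::'k)" for c by (simp add: tconst_def)
  have "degree (map_poly tconst f) = degree f" by (rule degree_map_poly) (simp add: inj)
  thus ?thesis unfolding subst3_def by (simp add: poly_altdef coeff_map_poly)
qed

lemma Nf_sum: "Nf (f::'k::comm_ring_1 poly) = (\<Sum>j\<le>degree f. tconst (coeff f j) * Nj j)"
  unfolding Nf_def subst3_sum Nj_def by (simp add: sum.distrib algebra_simps)

lemma Nf_monom: "Nf (monom 1 j :: 'k::comm_ring_1 poly) = Nj j"
  unfolding Nf_def Nj_def subst3_def by (simp add: map_poly_monom poly_monom)

lemma phi_of_eq: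
  assumes "(2::'k::field) = 0"
  shows "den * phi_of (f::'k poly) = Nf f"
proof -
  have "den dvd Nf f" unfolding Nf_sum
    by (intro dvd_sum dvd_mult den_dvd_Nj[OF assms])
  moreover have "phi_of f = Nf f div den" unfolding phi_of_def Nf_def den_def by simp
  ultimately show ?thesis by simp
qed



lemma pderiv_sq: "pderiv (L * L * W) = L * (L * pderiv W + 2 * (W * pderiv (L::'K::idom poly)))"
  by (simp add: pderiv_mult algebra_simps mult_2)

lemma Fq_card:
  fixes k :: nat
  assumes c: "(2::'K::alg_closed_field) = 0" and k: "k \<ge> 1"
  shows "finite {a::'K. a^(2^k) = a} \<and> card {a::'K. a^(2^k) = a} = 2^k"
proof -
  define q where "q = (2::nat)^k"
  have q2: "q \<ge> 2" unfolding q_def using k by (metis one_le_power power_one_right power_increasing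
      le_numeral_extra(4) one_le_numeral power_le_imp_le_exp less_exp not_less order_le_less_trans
      self_le_power zero_less_numeral)
  define P where "P = monom (1::'K) q - [:0,1:]"
  have polyP: "poly P x = x^q - x" for x unfolding P_def by (simp add: poly_monom)
  have cP: "coeff P q = 1" using q2 unfolding P_def by (simp add: coeff_pCons split: nat.splits)
  hence Pnz: "P \<noteq> 0" by auto
  have dP: "degree P = q"
  proof (rule antisym)
    show "degree P \<le> q" unfolding P_def using q2
      by (intro degree_diff_le) (auto simp: degree_monom_le)
    show "q \<le> degree P" using cP by (simp add: le_degree)
  qed
  define F where "F = {a::'K. a^q = a}"
  have F_eq: "F = {x. poly P x = 0}" unfolding F_def polyP by auto
  have finF: "finite F" unfolding F_eq using poly_roots_finite[OF Pnz] .
  have "\<forall>b\<in>F. poly P b = 0" unfolding F_eq by simp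
  from roots_prod_dvd[OF finF this] obtain M where M: "P = (\<Prod>b\<in>F. [:-b,1:]) * M" by (auto elim: dvdE)
  have Mnz: "M \<noteq> 0" using Pnz M by auto
  have dM: "degree M = 0"
  proof (rule ccontr)
    assume "degree M \<noteq> 0"
    then obtain \<beta> where \<beta>: "poly M \<beta> = 0" using alg_closed_imp_poly_has_root by blast
    have "poly P \<beta> = 0" using M \<beta> by simp
    hence bF: "\<beta> \<in> F" unfolding F_eq by simp
    obtain M' where M': "M = [:-\<beta>,1:] * M'" using \<beta> by (auto simp: poly_eq_0_iff_dvd elim: dvdE)
    have rem: "(\<Prod>b\<in>F. [:-b,1:]) = [:-\<beta>,1:] * (\<Prod>b\<in>F-{\<beta>}. [:-b,1:])"
      using finF bF by (rule prod.remove)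
    have Pf: "P = [:-\<beta>,1:] * [:-\<beta>,1:] * ((\<Prod>b\<in>F-{\<beta>}. [:-b,1:]) * M')"
      unfolding M M' rem by (simp only: ac_simps)
    have "poly (pderiv P) \<beta> = 0"
    proof -
      have "poly [:-\<beta>,1:] \<beta> = 0" by simp
      thus ?thesis unfolding Pf pderiv_sq by (simp only: poly_mult mult_zero_left)
    qed
    moreover have "pderiv P = -1"
    proof -
      have "(of_nat q :: 'K) = 2 ^ k" unfolding q_def by simp
      also have "\<dots> = 0" using c k by simp
      finally have "(of_nat q :: 'K) = 0" .
      thus ?thesis unfolding P_def pderiv_diff pderiv_monom by (simp add: pderiv_pCons one_pCons)
    qed
    ultimately show False by simp
  qed
  have "degree P = card F + degree M"
    using M Mnz by (simp add: degree_mult_eq linprod_nz degree_linprod finF)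
  thus ?thesis using dP dM finF unfolding F_def q_def by simp
qed

lemma key_identity:
  fixes a b y z Y Z :: "'b::comm_ring_1"
  shows "(a*y+b*z)*(a*Y+b*Z) + y*Y + z*Z + (b*y+a*z)*(b*Y+a*Z)
         = (a*a + b*b + 1)*(y*Y+z*Z) + 2*(a*b*(y*Z+z*Y))"
  by (simp add: algebra_simps mult_2)

definition cst :: "'k::comm_ring_1 \<Rightarrow> 'k poly poly" where "cst a = [:[:a:]:]"
definition rr :: "'k::comm_ring_1 \<Rightarrow> 'k poly poly" where "rr a = cst a * yy + cst (1+a) * zz"

lemma rr_coeff: "coeff (coeff (rr a) 1) 0 = a"
  by (simp add: rr_def cst_def yy_def zz_def)

lemma rr_1: "(2::'k::comm_ring_1) = 0 \<Longrightarrow> rr (1::'k) = yy"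
  by (simp add: rr_def cst_def one_pCons yy_def zz_def)

lemma rr_0: "rr 0 = zz"
  by (simp add: rr_def cst_def flip: one_pCons)

lemma cst_power: "cst a ^ n = cst (a ^ n)" by (simp add: cst_def poly_const_pow)
lemma cst_1add: "cst (1 + a) = 1 + cst a" by (simp add: cst_def one_pCons)

lemma Nj_root:
  fixes a :: "'k::comm_ring_1"
  assumes c: "(2::'k) = 0" and a: "a^(2^k) = a"
  shows "poly (Nj (2^k+1)) (rr a) = 0"
proof -
  define Q where "Q = (2::nat)^k"
  have c2: "(2::'k poly poly) = 0" using char2_poly[OF char2_poly[OF c]] .
  define A where "A = cst a"
  define B where "B = cst (1 + a)"
  have AQ: "A^Q = A" unfolding A_def Q_def cst_power using a by simp
  have "(1 + a)^Q = 1 + a" unfolding Q_def using frob[OF c, of 1 a k] a by simp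
  hence BQ: "B^Q = B" unfolding B_def cst_power by simp
  have B1: "B = 1 + A" unfolding A_def B_def by (rule cst_1add)
  have r: "rr a = A*yy + B*zz" unfolding rr_def A_def B_def ..
  have rQ: "(A*yy + B*zz)^Q = A*yy^Q + B*zz^Q"
    unfolding Q_def using frob[OF c2, of "A*yy" "B*zz" k] AQ BQ unfolding Q_def
    by (simp add: power_mult_distrib)
  have s: "A*yy + B*zz + yy + zz = B*yy + A*zz + 2*zz" unfolding B1 by (simp add: algebra_simps mult_2)
  hence s': "A*yy + B*zz + yy + zz = B*yy + A*zz" using c2 by simp
  have sQ: "(B*yy + A*zz)^Q = B*yy^Q + A*zz^Q"
    unfolding Q_def using frob[OF c2, of "B*yy" "A*zz" k] AQ BQ unfolding Q_def
    by (simp add: power_mult_distrib)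
  have "poly (Nj (Q+1)) (rr a) = (A*yy + B*zz) * (A*yy + B*zz)^Q + yy * yy^Q + zz * zz^Q
        + (B*yy + A*zz) * (B*yy + A*zz)^Q"
    unfolding poly_Nj r s' by simp
  also have "\<dots> = (A*yy+B*zz)*(A*yy^Q+B*zz^Q) + yy*yy^Q + zz*zz^Q + (B*yy+A*zz)*(B*yy^Q+A*zz^Q)"
    unfolding rQ sQ ..
  also have "\<dots> = (A*A + B*B + 1)*(yy*yy^Q+zz*zz^Q) + 2*(A*B*(yy*zz^Q+zz*yy^Q))"
    by (rule key_identity)
  also have "A*A + B*B + 1 = 2 * (A*A + A + 1)" unfolding B1 by (simp add: algebra_simps mult_2)
  also have "2 * (A*A + A + 1) * (yy*yy^Q+zz*zz^Q) + 2*(A*B*(yy*zz^Q+zz*yy^Q)) = 0"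
    using c2 by simp
  finally show ?thesis unfolding Q_def .
qed

lemma Nj_expl_ring:
  fixes xx yv zv :: "'b::comm_ring_1" and Q :: nat
  assumes c: "(2::'b) = 0" and fQ: "\<And>a b::'b. (a+b)^Q = a^Q + b^Q"
  shows "xx^(Q+1) + yv^(Q+1) + zv^(Q+1) + (xx+yv+zv)^(Q+1)
       = (yv+zv)*xx^Q + (yv+zv)^Q*xx + (yv^(Q+1) + zv^(Q+1) + (yv+zv)^Q * (yv+zv))"
proof -
  define ww where "ww = yv + zv"
  have e1: "(xx+yv+zv)^(Q+1) = (xx^Q + ww^Q) * (xx + ww)"
    by (simp only: ww_def add.assoc power_add power_one_right fQ)
  have "xx^(Q+1) + yv^(Q+1) + zv^(Q+1) + (xx+yv+zv)^(Q+1)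
       = ww*xx^Q + ww^Q*xx + (yv^(Q+1) + zv^(Q+1) + ww^Q * ww) + 2 * (xx^Q * xx)"
  proof -
    have atoms: "p*x + y1 + z1 + (p + r)*(x+w) = w*p + r*x + (y1 + z1 + r*w) + 2*(p*x)"
      for p x y1 z1 r w :: 'b by (simp add: algebra_simps mult_2)
    show ?thesis unfolding e1 unfolding power_add power_one_right by (rule atoms)
  qed
  thus ?thesis using c unfolding ww_def by simp
qed

lemma const_mult_monom: "[:c::'a::comm_ring_1:] * monom 1 n = monom c n"
  by (simp add: monom_0[symmetric] mult_monom)

lemma Nj_degree:
  assumes c: "(2::'k::idom) = 0" and k: "k \<ge> 1"
  shows "degree (Nj (2^k+1) :: 'k tpoly) = 2^k \<and> lead_coeff (Nj (2^k+1) :: 'k tpoly) = yy + zz"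
proof -
  define Q where "Q = (2::nat)^k"
  have Q2: "Q \<ge> 2" unfolding Q_def using k by (simp add: self_le_power order_trans[of 2 "2^1"] power_increasing)
  have c3: "(2::'k tpoly) = 0" using char2_poly[OF char2_poly[OF char2_poly[OF c]]] .
  have fQ: "(a+b)^Q = a^Q + b^Q" for a b :: "'k tpoly" unfolding Q_def by (rule frob[OF c3])
  define s where "s = (yy + zz :: 'k poly poly)"
  define e where "e = yy^(Q+1) + zz^(Q+1) + s^Q * s"
  have vx: "varX = (monom 1 1 :: 'k tpoly)" by (simp add: varX_def monom_altdef)
  have vyz: "varY + varZ = ([:s:] :: 'k tpoly)" by (simp add: varY_yy varZ_zz s_def)
  have "(Nj (Q+1) :: 'k tpoly) = (varY+varZ)*varX^Q + (varY+varZ)^Q*varX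
        + (varY^(Q+1) + varZ^(Q+1) + (varY+varZ)^Q * (varY+varZ))"
    unfolding Nj_def by (rule Nj_expl_ring[OF c3 fQ])
  also have "\<dots> = monom s Q + monom (s^Q) 1 + monom e 0"
    unfolding vyz unfolding vx varY_yy varZ_zz monom_power poly_const_pow
    by (simp add: const_mult_monom e_def monom_0 smult_monom mult.commute[of "s^Q" s])
  finally have N: "(Nj (Q+1) :: 'k tpoly) = monom s Q + monom (s^Q) 1 + monom e 0" .
  have snz: "s \<noteq> 0" unfolding s_def by (rule yy_zz_nz)
  have cq: "coeff (Nj (Q+1) :: 'k tpoly) Q = s" unfolding N using Q2 by (simp add: coeff_monom)
  have "degree (Nj (Q+1) :: 'k tpoly) \<le> Q" unfolding N using Q2
    by (intro degree_add_le) (auto simp: degree_monom_le intro: order_trans[OF degree_monom_le])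
  moreover have "Q \<le> degree (Nj (Q+1) :: 'k tpoly)" using cq snz by (simp add: le_degree)
  ultimately have "degree (Nj (Q+1) :: 'k tpoly) = Q" by simp
  thus ?thesis using cq unfolding Q_def s_def by simp
qed

lemma Phi_fact:
  fixes Phi :: "'K::alg_closed_field tpoly"
  assumes c: "(2::'K) = 0" and k: "k \<ge> 1" and e: "den * Phi = Nj (2^k+1)"
  shows "\<exists>A. finite A \<and> card A = 2^k - 2 \<and> Phi = (\<Prod>a\<in>A. [:-a,1:])"
proof -
  define Q where "Q = (2::nat)^k"
  have Q2: "Q \<ge> 2" unfolding Q_def using k by (simp add: self_le_power order_trans[of 2 "2^1"] power_increasing)
  define F where "F = {a::'K. a^Q = a}"
  have finF: "finite F" and cF: "card F = Q" using Fq_card[OF c k] unfolding F_def Q_def by auto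
  have inj: "inj_on rr F" by (rule inj_onI) (metis rr_coeff)
  define Rq where "Rq = rr ` F"
  have finR: "finite Rq" unfolding Rq_def using finF by simp
  have cR: "card Rq = Q" unfolding Rq_def using card_image[OF inj] cF by simp
  have "\<forall>\<rho>\<in>Rq. poly (Nj (Q+1) :: 'K tpoly) \<rho> = 0"
    unfolding Rq_def F_def Q_def using Nj_root[OF c] by auto
  from roots_prod_dvd[OF finR this] obtain M where M: "(Nj (Q+1) :: 'K tpoly) = (\<Prod>\<rho>\<in>Rq. [:-\<rho>,1:]) * M"
    by (auto elim: dvdE)
  have dN: "degree (Nj (Q+1) :: 'K tpoly) = Q" and lN: "lead_coeff (Nj (Q+1) :: 'K tpoly) = yy + zz"
    using Nj_degree[OF c k] unfolding Q_def by auto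
  have Nnz: "(Nj (Q+1) :: 'K tpoly) \<noteq> 0" using lN yy_zz_nz by auto
  hence Mnz: "M \<noteq> 0" using M by auto
  have "degree (Nj (Q+1) :: 'K tpoly) = card Rq + degree M"
    using M Mnz by (simp add: degree_mult_eq linprod_nz degree_linprod finR)
  hence "degree M = 0" using dN cR by simp
  then obtain m where m: "M = [:m:]" by (rule degree_eq_zeroE)
  have "lead_coeff (Nj (Q+1) :: 'K tpoly) = m" using M m by (simp add: lead_coeff_mult monic_linprod)
  hence mv: "m = yy + zz" using lN by simp
  have yR: "yy \<in> Rq" unfolding Rq_def F_def using rr_1[OF c] by (metis (mono_tags) image_eqI mem_Collect_eq power_one)
  have zR: "zz \<in> Rq" unfolding Rq_def F_def using rr_0 Q2
    by (metis (mono_tags, lifting) image_eqI mem_Collect_eq zero_power not_numeral_le_zero gr0I)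
  define A where "A = Rq - {yy} - {zz}"
  have finA: "finite A" unfolding A_def using finR by simp
  have cA: "card A = Q - 2" unfolding A_def using cR yR zR yy_ne_zz[where 'k='K]
    by (auto simp add: card_Diff_singleton_if finR numeral_2_eq_2)
  have p1: "(\<Prod>\<rho>\<in>Rq. [:-\<rho>,1:]) = [:-yy,1:] * (\<Prod>\<rho>\<in>Rq-{yy}. [:-\<rho>,1::'K poly poly:])"
    using finR yR by (rule prod.remove)
  have p2: "(\<Prod>\<rho>\<in>Rq-{yy}. [:-\<rho>,1:]) = [:-zz,1:] * (\<Prod>\<rho>\<in>A. [:-\<rho>,1::'K poly poly:])"
    unfolding A_def using finR zR yy_ne_zz[where 'k='K] by (intro prod.remove) auto
  have "den * Phi = (Nj (Q+1) :: 'K tpoly)" using e unfolding Q_def .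
  also have "\<dots> = den * (\<Prod>\<rho>\<in>A. [:-\<rho>,1:])"
    unfolding den_alt[OF c] M m mv p1 p2 by (simp only: ac_simps)
  finally have "den * Phi = den * (\<Prod>\<rho>\<in>A. [:-\<rho>,1:])" .
  hence "Phi = (\<Prod>\<rho>\<in>A. [:-\<rho>,1:])" using den_nz[OF c] by simp
  thus ?thesis using finA cA unfolding Q_def by blast
qed



lemma my_of_nat_eq_iff_CHAR:
  "of_nat x = (of_nat y :: 'a::ring_1) \<longleftrightarrow> x mod CHAR('a) = y mod CHAR('a)"
proof (induction x y rule: linorder_wlog)
  case (le x y)
  have "of_nat y = (of_nat x::'a) + of_nat (y - x)" using le by (simp flip: of_nat_add)
  hence "of_nat x = (of_nat y :: 'a) \<longleftrightarrow> (of_nat (y-x)::'a) = 0" by auto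
  also have "\<dots> \<longleftrightarrow> CHAR('a) dvd (y - x)" by (rule of_nat_eq_0_iff_char_dvd)
  also have "\<dots> \<longleftrightarrow> y mod CHAR('a) = x mod CHAR('a)" using mod_eq_dvd_iff_nat[OF le] by simp
  finally show ?case by auto
qed (auto simp: eq_commute)

lemma my_CHAR_dvd_CARD: "CHAR('a::ring_1) dvd card (UNIV :: 'a set)"
proof (cases "card (UNIV :: 'a set) = 0")
  case False
  hence [intro]: "CHAR('a) > 0"
    by (simp add: card_eq_0_iff finite_imp_CHAR_pos)    
  define G where "G = \<lparr> carrier = (UNIV :: 'a set), monoid.mult = (+), one = (0 :: 'a) \<rparr>"
  define H where "H = (of_nat ` {..<CHAR('a)} :: 'a set)"
  interpret group G
  proof (rule groupI)
    fix x assume x: "x \<in> carrier G"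
    show "\<exists>y\<in>carrier G. y \<otimes>\<^bsub>G\<^esub> x = \<one>\<^bsub>G\<^esub>"
      by (intro bexI[of _ "-x"]) (auto simp: G_def)
  qed (auto simp: G_def add_ac)

  interpret subgroup H G
  proof
    show "\<one>\<^bsub>G\<^esub> \<in> H"
      using False unfolding G_def H_def by force
  next
    fix x y :: 'a
    assume "x \<in> H" "y \<in> H"
    then obtain x' y' where [simp]: "x = of_nat x'" "y = of_nat y'"
      by (auto simp: H_def)
    have "x + y = of_nat ((x' + y') mod CHAR('a))"
      by (auto simp flip: of_nat_add simp: my_of_nat_eq_iff_CHAR)
    moreover have "(x' + y') mod CHAR('a) < CHAR('a)"
      using H_def \<open>y \<in> H\<close> by fastforce
    ultimately show "x \<otimes>\<^bsub>G\<^esub> y \<in> H"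
      by (auto simp: H_def G_def intro!: imageI)
  next
    fix x :: 'a
    assume x: "x \<in> H"
    then obtain x' where [simp]: "x = of_nat x'" and x': "x' < CHAR('a)"
      by (auto simp: H_def)
    have "CHAR('a) dvd x' + (CHAR('a) - x') mod CHAR('a)"
      using mod_eq_0_iff_dvd mod_if x' by fastforce
    hence "x + of_nat ((CHAR('a) - x') mod CHAR('a)) = 0"
      by (auto simp flip: of_nat_add simp: of_nat_eq_0_iff_char_dvd)
    moreover from this have "inv\<^bsub>G\<^esub> x = of_nat ((CHAR('a) - x') mod CHAR('a))"
      by (intro inv_equality) (auto simp: G_def add_ac)
    moreover have "of_nat ((CHAR('a) - x') mod CHAR('a)) \<in> H"
      unfolding H_def using \<open>CHAR('a) > 0\<close> by (intro imageI) auto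
    ultimately show "inv\<^bsub>G\<^esub> x \<in> H" by force
  qed (auto simp: G_def H_def)

  have "card H dvd card (rcosets\<^bsub>G\<^esub> H) * card H"
    by simp
  also have "card (rcosets\<^bsub>G\<^esub> H) * card H = Coset.order G"
  proof (rule lagrange_finite)
    show "finite (carrier G)"
      using False card_ge_0_finite by (auto simp: G_def)
  qed (fact is_subgroup)
  finally have "card H dvd card (UNIV :: 'a set)"
    by (simp add: Coset.order_def G_def)
  also have "card H = card {..<CHAR('a)}"
    unfolding H_def by (intro card_image inj_onI) (auto simp: my_of_nat_eq_iff_CHAR)
  finally show "CHAR('a) dvd card (UNIV :: 'a set)"
    by simp
qed auto


lemma char2_of_card:
  assumes "card (UNIV :: 'a::{field,finite} set) = 2 ^ m"
  shows "(2::'a) = 0"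
proof -
  have pos: "CHAR('a) > 0" by (rule finite_imp_CHAR_pos) simp
  have pr: "prime CHAR('a)" by (rule prime_CHAR_semidom[OF pos])
  have "CHAR('a) dvd 2 ^ m" using my_CHAR_dvd_CARD[where 'a='a] assms by simp
  hence "CHAR('a) dvd 2" using pr prime_dvd_power by blast
  hence "CHAR('a) \<le> 2" by (rule dvd_imp_le) simp
  moreover have "CHAR('a) > 1" using pr by (rule prime_gt_1_nat)
  ultimately have "CHAR('a) = 2" by simp
  thus ?thesis by (metis of_nat_CHAR of_nat_numeral)
qed

lemma sum_shift3:
  fixes T :: "nat \<Rightarrow> 'b::comm_monoid_add"
  assumes "\<And>j. j < 3 \<Longrightarrow> T j = 0"
  shows "(\<Sum>j\<le>d. if j - 3 = i then T j else (0::'b::comm_monoid_add)) = (if i + 3 \<le> d then T (i+3) else 0)"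
proof -
  have "(\<Sum>j\<le>d. if j - 3 = i then T j else 0) = (\<Sum>j\<le>d. if j = i + 3 then T j else 0)"
    by (rule sum.cong) (auto simp: assms)
  also have "\<dots> = (if i + 3 \<le> d then T (i+3) else 0)" by (simp add: sum.delta)
  finally show ?thesis .
qed

lemma Nj4_zero: "(2::'k::comm_ring_1) = 0 \<Longrightarrow> (Nj 4 :: 'k tpoly) = 0"
proof -
  assume c: "(2::'k) = 0"
  have c3: "(2::'k tpoly) = 0" using char2_poly[OF char2_poly[OF char2_poly[OF c]]] .
  have e: "(2::nat)^2 = 4" by simp
  have f: "(a + b)^4 = a^4 + b^4" for a b :: "'k tpoly" using frob[OF c3, of a b 2] by (simp only: e)
  have atoms: "x + y + z + (x + y + z) = 2 * (x + y + z)" for x y z :: "'k tpoly" by (simp only: mult_2)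
  have "(Nj 4 :: 'k tpoly) = 2 * (varX^4 + varY^4 + varZ^4)" unfolding Nj_def f by (rule atoms)
  thus ?thesis using c3 by simp
qed

lemma const_mult_monom': "[:c::'a::comm_ring_1:] * monom a n = monom (c * a) n"
  by (simp add: monom_0[symmetric] mult_monom)

theorem theorem3p1:
  fixes m k :: nat and g :: "'a::{field,finite} poly"
  assumes "card (UNIV :: 'a set) = 2 ^ m"
    and "k \<ge> 2"
    and "degree g \<le> 2 ^ (k - 1) + 1"
    and "\<exists>j. coeff g j \<noteq> 0 \<and> abs_irreducible (phi_j j :: 'a tpoly)"
  shows "abs_irreducible (phi_of (monom 1 (2 ^ k + 1) + g))"
proof -
  note card = assms(1) and k2 = assms(2) and dg = assms(3)
  obtain j0 where gj0: "coeff g j0 \<noteq> 0" and irr0: "abs_irreducible (phi_j j0 :: 'a tpoly)"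
    using assms(4) by blast
  have ca: "(2::'a) = 0" by (rule char2_of_card[OF card])
  have cK: "(2::'a alg_closure) = 0" using ca by (metis to_ac_numeral to_ac_0)
  define M1 :: "'a poly \<Rightarrow> 'a alg_closure poly" where "M1 = map_poly to_ac"
  define M2 :: "'a poly poly \<Rightarrow> 'a alg_closure poly poly" where "M2 = map_poly M1"
  define M3 :: "'a tpoly \<Rightarrow> 'a alg_closure tpoly" where "M3 = map_poly M2"
  have rto: "rhom (to_ac :: 'a \<Rightarrow> 'a alg_closure)" unfolding rhom_def by simp
  have r1: "rhom M1" unfolding M1_def by (rule rhom_map_poly[OF rto])
  have r2: "rhom M2" unfolding M2_def by (rule rhom_map_poly[OF r1])
  have rM: "rhom M3" unfolding M3_def by (rule rhom_map_poly[OF r2])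
  have M1_0: "M1 0 = 0" and M1_1: "M1 1 = 1" using rhomD[OF r1] by auto
  have M2_0: "M2 0 = 0" and M2_1: "M2 1 = 1" using rhomD[OF r2] by auto
  have MX: "M3 varX = varX" unfolding M3_def varX_def by (simp add: map_poly_pCons M2_0 M2_1)
  have MY: "M3 varY = varY" unfolding M3_def M2_def varY_def
    by (simp add: map_poly_pCons M1_0 M1_1 M2_0[unfolded M2_def])
  have MZ: "M3 varZ = varZ" unfolding M3_def M2_def M1_def varZ_def
    by (simp add: map_poly_pCons)
  have MT: "M3 (tconst c) = tconst (to_ac c)" for c
    unfolding M3_def M2_def M1_def tconst_def by (simp add: map_poly_pCons)
  have MN: "M3 (Nj j) = Nj j" for j
    unfolding Nj_def by (simp add: rhomD[OF rM] rhom_power[OF rM] MX MY MZ)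
  have MD: "M3 den = den" unfolding den_def by (simp add: rhomD[OF rM] MX MY MZ)
  have denK: "(den :: 'a alg_closure tpoly) \<noteq> 0" by (rule den_nz[OF cK])
  define Phi where "Phi j = M3 (phi_j j)" for j
  have denPhi: "den * Phi j = Nj j" for j
  proof -
    have "den * phi_j j = (Nj j :: 'a tpoly)" unfolding phi_j_def using phi_of_eq[OF ca] Nf_monom by metis
    hence "M3 (den * phi_j j) = M3 (Nj j)" by simp
    thus ?thesis unfolding Phi_def rhomD(4)[OF rM] MD MN .
  qed
  have SPhi: "S (Phi j) = monom (Phi j) (j-3) \<and> (j < 3 \<longrightarrow> Phi j = 0)" for j
    by (rule hom_div[OF denPhi denK S_Nj])
  have irrK: "irreducible (Phi j0)" using irr0 unfolding abs_irreducible_def Phi_def M3_def M2_def M1_def .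
  hence Phi0nz: "Phi j0 \<noteq> 0" by auto
  have j03: "j0 \<ge> 3" using SPhi[of j0] Phi0nz by (cases "j0 < 3") auto
  define d where "d = (2::nat)^k + 1"
  define D where "D = (2::nat)^k - 2"
  define H where "H = (2::nat)^(k-1) - 1"
  define p where "p = (2::nat)^(k-2)"
  have p1: "p \<ge> 1" unfolding p_def by simp
  have kk: "k = (k - 2) + 2" using k2 by simp
  have pk: "(2::nat)^k = 4 * p" unfolding p_def by (subst kk) (simp only: power_add, simp)
  have kk1: "k - 1 = (k - 2) + 1" using k2 by simp
  have pk1: "(2::nat)^(k-1) = 2 * p" unfolding p_def kk1 by simp
  have H1: "H \<ge> 1" unfolding H_def pk1 using p1 by linarith
  have DH: "D = 2 * H" unfolding D_def H_def pk pk1 using p1 by linarith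
  have dD: "d = D + 3" unfolding d_def D_def pk using p1 by linarith
  have dgH: "degree g \<le> H + 2" using dg pk1 p1 unfolding H_def by linarith
  define f where "f = monom 1 d + g"
  have dgd: "degree g < d" using dgH dD DH by linarith
  have cfd: "coeff f d = 1" unfolding f_def using dgd by (simp add: coeff_eq_0)
  have cfj: "j \<noteq> d \<Longrightarrow> coeff f j = coeff g j" for j unfolding f_def by simp
  have df: "degree f = d"
  proof (rule antisym)
    show "degree f \<le> d" unfolding f_def using dgd
      by (intro degree_add_le) (auto simp: degree_monom_le)
    show "d \<le> degree f" using cfd by (simp add: le_degree)
  qed
  define cc where "cc j = to_ac (coeff f j)" for j
  define phi where "phi = M3 (phi_of f)"
  define T where "T j = tconst (cc j) * Phi j" for j
  have phi_eq: "phi = (\<Sum>j\<le>d. T j)"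
  proof -
    have "M3 (den * phi_of f) = M3 (Nf f)" using phi_of_eq[OF ca, of f] by simp
    hence "den * phi = (\<Sum>j\<le>d. tconst (cc j) * Nj j)"
      unfolding phi_def rhomD(4)[OF rM] MD Nf_sum df rhom_sum[OF rM] MT MN cc_def .
    also have "\<dots> = den * (\<Sum>j\<le>d. T j)" unfolding T_def sum_distrib_left
      by (rule sum.cong) (simp_all add: denPhi[symmetric] ac_simps)
    finally show ?thesis using denK by simp
  qed
  have ST: "S (T j) = monom (T j) (j - 3)" for j
    unfolding T_def S_mult S_tconst using SPhi[of j] by (simp add: const_mult_monom' smult_monom)
  have T3: "j < 3 \<Longrightarrow> T j = 0" for j unfolding T_def using SPhi[of j] by simp
  have cS: "coeff (S phi) i = (if i + 3 \<le> d then T (i+3) else 0)" for i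
  proof -
    have "coeff (S phi) i = (\<Sum>j\<le>d. if j - 3 = i then T j else 0)"
      unfolding phi_eq rhom_sum[OF rhom_S] ST coeff_sum by (simp add: coeff_monom)
    also have "\<dots> = (if i + 3 \<le> d then T (i+3) else 0)" by (rule sum_shift3[OF T3])
    finally show ?thesis .
  qed
  have k1: "k \<ge> 1" using k2 by simp
  obtain A where finA: "finite A" and cA: "card A = D" and PhiA: "Phi d = (\<Prod>a\<in>A. [:-a,1:])"
    using Phi_fact[OF cK k1 denPhi[of d, unfolded d_def]] unfolding D_def d_def by blast
  have Pdnz: "Phi d \<noteq> 0" unfolding PhiA by (rule linprod_nz)
  have cSD: "coeff (S phi) D = Phi d" unfolding cS T_def using dD cfd by (simp add: cc_def)
  have cSbig: "coeff (S phi) i = 0" if "i > D" for i unfolding cS using that dD by simp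
  have cSmid: "coeff (S phi) i = 0" if "H \<le> i" "i < D" for i
  proof -
    have "coeff f (i+3) = 0" using cfj[of "i+3"] that dD dgH by (simp add: coeff_eq_0)
    thus ?thesis unfolding cS T_def cc_def by simp
  qed
  have dS: "degree (S phi) = D"
  proof (rule antisym)
    show "degree (S phi) \<le> D" by (rule degree_le) (simp add: cSbig)
    show "D \<le> degree (S phi)" using cSD Pdnz by (simp add: le_degree)
  qed
  have lS: "lead_coeff (S phi) = Phi d" using dS cSD by simp
  have D2: "D \<ge> 2" using DH H1 by simp
  have cc0: "cc j0 \<noteq> 0" unfolding cc_def using cfj[of j0] gj0
    by (metis le_degree dgd not_le to_ac_eq_0_iff)
  have j0d: "j0 + 0 \<le> d" using le_degree[OF gj0] dgd by simp
  have cSj0: "coeff (S phi) (j0 - 3) = T j0" unfolding cS using j03 j0d by simp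
  have Tj0nz: "T j0 \<noteq> 0" unfolding T_def using cc0 Phi0nz by (simp add: tconst_def)
  have tcu: "tconst (cc j0) dvd 1"
  proof -
    have "tconst (cc j0) * tconst (inverse (cc j0)) = 1"
      using cc0 rhomD(4)[OF rhom_tconst, of "cc j0" "inverse (cc j0)"] by simp
    thus ?thesis by (metis dvd_triv_left)
  qed
  have Phi4: "Phi 4 = 0" using denPhi[of 4] Nj4_zero[OF cK] denK by simp
  have nf: False if fac: "phi = P * Q" and nuP: "\<not> P dvd 1" and nuQ: "\<not> Q dvd 1"
     and le: "degree (S Q) \<le> degree (S P)" for P Q
  proof -
    have SPQ: "S phi = S P * S Q" unfolding fac S_mult ..
    have SPnz: "S P \<noteq> 0" and SQnz: "S Q \<noteq> 0" using SPQ dS D2 by auto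
    define s where "s = degree (S P)"
    define t where "t = degree (S Q)"
    have st: "s + t = D" unfolding s_def t_def using dS SPQ SPnz SQnz by (simp add: degree_mult_eq)
    have tH: "t \<le> H" using st le DH unfolding s_def t_def by linarith
    have lead: "lead_coeff (S P) * lead_coeff (S Q) = (\<Prod>a\<in>A. [:-a,1:])"
      using lS SPQ PhiA by (simp add: lead_coeff_mult)
    have z: "coeff (S P * S Q) (s + t - n) = 0" if "1 \<le> n" "n \<le> t" for n
      unfolding SPQ[symmetric] st using that tH DH H1 by (intro cSmid) auto
    from core[OF s_def[symmetric] t_def[symmetric] le[folded s_def t_def] z lead finA _ S_xdeg S_xdeg]
    obtain c A2 where SQ: "S Q = monom (lead_coeff (S Q)) t" and cu: "c dvd 1" and A2A: "A2 \<subseteq> A"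
      and cA2: "card A2 = t" and q0: "lead_coeff (S Q) = smult c (\<Prod>a\<in>A2. [:-a,1:])"
      using cA st by auto
    have Qq: "Q = smult c (\<Prod>a\<in>A2. [:-a,1:])"
    proof -
      have "Q = poly (S Q) 1" by (simp add: S_eval1)
      also have "\<dots> = lead_coeff (S Q)" by (subst SQ) (simp add: poly_monom)
      finally show ?thesis using q0 by simp
    qed
    have fA2: "finite A2" using A2A finA by (rule finite_subset)
    have c0: "c \<noteq> 0" using cu by auto
    have t1: "t \<ge> 1"
    proof (rule ccontr)
      assume "\<not> t \<ge> 1" hence "card A2 = 0" using cA2 by simp
      hence "A2 = {}" using fA2 by simp
      hence "Q = [:c:]" using Qq by simp
      thus False using nuQ cu by (simp add: is_unit_const_poly_iff)
    qed
    have "coeff (S phi) (j0 - 3) = coeff (monom Q t * S P) (j0 - 3)"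
      using SPQ SQ Qq q0 by (simp add: mult.commute)
    hence "T j0 = (if j0 - 3 < t then 0 else Q * coeff (S P) (j0 - 3 - t))"
      using cSj0 by (simp add: coeff_monom_mult)
    hence "Q dvd T j0" using Tj0nz by (auto split: if_splits)
    hence "Q dvd Phi j0" unfolding T_def using tcu by (simp add: dvd_mult_unit_iff')
    then obtain w where w: "Phi j0 = Q * w" by (rule dvdE)
    have wu: "w dvd 1" using irreducibleD[OF irrK w] nuQ by blast
    have wnz: "w \<noteq> 0" using wu by auto
    have tt: "t = 1"
    proof (rule ccontr)
      assume "t \<noteq> 1" hence t2: "t \<ge> 2" using t1 by simp
      then obtain a where a: "a \<in> A2" using cA2 by (metis card.empty ex_in_conv not_numeral_le_zero)
      have "Q = [:-a,1:] * (smult c (\<Prod>a\<in>A2-{a}. [:-a,1:]))"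
        unfolding Qq prod.remove[OF fA2 a] by (simp add: mult_smult_right)
      hence eq: "Phi j0 = [:-a,1:] * (smult c (\<Prod>a\<in>A2-{a}. [:-a,1:]) * w)" using w by (simp only: mult.assoc)
      have u1: "\<not> [:-a,1:] dvd 1"
      proof
        assume "[:-a,1:] dvd 1" then obtain cc' where "[:-a,1:] = [:cc':]" by (rule is_unit_polyE)
        thus False by simp
      qed
      have "degree (smult c (\<Prod>a\<in>A2-{a}. [:-a,1:]) * w) = card (A2 - {a}) + degree w"
        using c0 wnz fA2 by (simp add: degree_mult_eq linprod_nz degree_linprod)
      moreover have "card (A2 - {a}) \<ge> 1" using cA2 t2 a fA2 by (simp add: card_Diff_singleton)
      ultimately have "degree (smult c (\<Prod>a\<in>A2-{a}. [:-a,1:]) * w) \<noteq> 0" by simp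
      hence u2: "\<not> (smult c (\<Prod>a\<in>A2-{a}. [:-a,1:]) * w) dvd 1"
      proof (intro notI)
        assume dnz: "degree (smult c (\<Prod>a\<in>A2-{a}. [:-a,1:]) * w) \<noteq> 0"
           and "(smult c (\<Prod>a\<in>A2-{a}. [:-a,1:]) * w) dvd 1"
        then obtain cc' where "smult c (\<Prod>a\<in>A2-{a}. [:-a,1:]) * w = [:cc':]" by (elim is_unit_polyE)
        hence "degree (smult c (\<Prod>a\<in>A2-{a}. [:-a,1:]) * w) = 0" by (simp only: degree_pCons_0)
        thus False using dnz by contradiction
      qed
      show False using irreducibleD[OF irrK eq] u1 u2 by blast
    qed
    obtain v where v: "v \<noteq> 0" "S w = [:v:]" using S_unit[OF wu] by blast
    have Qnz: "Q \<noteq> 0" using SQnz rhomD(1)[OF rhom_S] by auto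
    have "monom (Phi j0) (j0 - 3) = S Q * S w" using SPhi[of j0] w S_mult by metis
    also have "\<dots> = monom (Q * v) 1"
    proof -
      have SQ1: "S Q = monom Q 1" using SQ q0 Qq tt by simp
      have "S Q * S w = [:v:] * monom Q 1" unfolding SQ1 v(2) by (rule mult.commute)
      also have "\<dots> = monom (v * Q) 1" by (rule const_mult_monom')
      finally show ?thesis by (simp only: mult.commute)
    qed
    finally have "degree (monom (Phi j0) (j0 - 3)) = degree (monom (Q * v) 1)" by simp
    hence "j0 - 3 = 1" using Phi0nz Qnz v by (simp add: degree_monom_eq)
    hence "j0 = 4" using j03 by simp
    thus False using Phi4 Phi0nz by simp
  qed
  have "irreducible phi"
  proof (rule irreducibleI)
    show "phi \<noteq> 0" proof assume "phi = 0" hence "S phi = 0" using rhomD(1)[OF rhom_S] by simp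
      thus False using dS D2 by simp qed
    show "\<not> phi dvd 1"
    proof
      assume "phi dvd 1" then obtain v where "S phi = [:v:]" using S_unit by blast
      thus False using dS D2 by simp
    qed
    fix P Q assume e: "phi = P * Q"
    show "P dvd 1 \<or> Q dvd 1"
    proof (rule ccontr)
      assume "\<not> (P dvd 1 \<or> Q dvd 1)"
      hence nu: "\<not> P dvd 1" "\<not> Q dvd 1" by auto
      show False
      proof (cases "degree (S Q) \<le> degree (S P)")
        case True then show False using nf[OF e nu] by blast
      next
        case False
        have "phi = Q * P" using e by (simp add: mult.commute)
        then show False using nf[OF _ nu(2) nu(1)] False by simp
      qed
    qed
  qed
  thus ?thesis unfolding abs_irreducible_def phi_def M3_def M2_def M1_def f_def d_def .
qed


end
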